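(* Let $n\ge 2$ and for $a\in\{-1,1\}^n$ put $\pi(a)=|\{i\in\{1,\dots,n\}:a_i=1\}|-1$. Let $Q\subseteq\mathbb{R}^{n+1}$ be the set of $(x,x_{n+1})\in\mathbb{R}^n\times\mathbb{R}$ satisfying $ax-\pi(a)x_{n+1}\le 1$ for all $a\in\{-1,1\}^n$, together with $0\le x_{n+1}\le 2$. Then: (i) $Q$ is a polytope all of whose vertices are integral (its vertices with $x_{n+1}=0$ are $(\pm u_i,0)$ and those with $x_{n+1}=2$ are $(\mathbf{1}\pm(n-1)u_i,2)$, $u_i$ the unit vectors); (ii) $Q$ contains no integer point in its interior; (iii) for each of the $2^n+2$ defining inequalities there is an integer point of $Q$ satisfying this inequality with equality and all other defining inequalities strictly; in particular each defining inequality defines a facet of $Q$ containing an integer point in its relative interior.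
   Context: $\mathbf{1}$ denotes the all-ones vector in $\mathbb{R}^n$ and $u_1,\dots,u_n$ the standard unit vectors of $\mathbb{R}^n$. *)

theory Defs
  imports "HOL-Analysis.Analysis"
begin

definition signvecs :: "(real^'n) set" where
  "signvecs = {a. \<forall>i. a $ i = 1 \<or> a $ i = -1}"

definition piv :: "real^'n \<Rightarrow> real" where
  "piv a = real (card {i. a $ i = 1}) - 1"

definition lhs :: "real^'n \<Rightarrow> (real^'n) \<times> real \<Rightarrow> real" where
  "lhs a p = a \<bullet> fst p - piv a * snd p"

definition Qpoly :: "((real^'n) \<times> real) set" where
  "Qpoly = {p. (\<forall>a\<in>signvecs. lhs a p \<le> 1) \<and> 0 \<le> snd p \<and> snd p \<le> 2}"

definition integral_pt :: "(real^'n) \<times> real \<Rightarrow> bool" where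
  "integral_pt p \<longleftrightarrow> (\<forall>i. fst p $ i \<in> \<int>) \<and> snd p \<in> \<int>"

end

theory Submission
  imports Defs
begin

lemma finite_signvecs: "finite (signvecs :: (real^'n) set)"
proof -
  let ?F = "{f::'n\<Rightarrow>real. \<forall>x. (x \<in> UNIV \<longrightarrow> f x \<in> {1,-1}) \<and> (x \<notin> UNIV \<longrightarrow> f x = 0)}"
  have "finite ?F" by (rule finite_set_of_finite_funs) auto
  moreover have "(signvecs :: (real^'n) set) \<subseteq> vec_lambda ` ?F"
  proof
    fix a :: "real^'n" assume "a \<in> signvecs"
    then have "(\<lambda>i. a$i) \<in> ?F" by (auto simp: signvecs_def)
    moreover have "a = vec_lambda (\<lambda>i. a$i)" by simp
    ultimately show "a \<in> vec_lambda ` ?F" by blast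
  qed
  ultimately show ?thesis by (meson finite_imageI finite_subset)
qed

lemma piv_sum:
  fixes a :: "real^'n"
  assumes "a \<in> signvecs"
  shows "piv a = (\<Sum>i\<in>UNIV. a$i) / 2 + real CARD('n) / 2 - 1"
proof -
  have e: "\<And>i. (if a$i = 1 then 1 else 0) = (a$i + 1) / (2::real)"
    using assms by (auto simp: signvecs_def)
  have "real (card {i. a $ i = 1}) = (\<Sum>i\<in>UNIV. if a$i = 1 then 1 else 0)"
    by (simp add: sum.If_cases)
  also have "\<dots> = (\<Sum>i\<in>UNIV. (a$i + 1) / 2)" by (simp only: e)
  also have "\<dots> = (\<Sum>i\<in>UNIV. a$i) / 2 + real CARD('n) / 2"
    by (simp add: sum_divide_distrib[symmetric] sum.distrib add_divide_distrib)
  finally show ?thesis by (simp add: piv_def)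
qed

lemma inner_vec1: "(a::real^'n) \<bullet> 1 = (\<Sum>i\<in>UNIV. a$i)"
  by (simp add: inner_vec_def)

lemma lhs_formula:
  fixes a :: "real^'n"
  assumes "a \<in> signvecs"
  shows "lhs a p = a \<bullet> (fst p - (snd p / 2) *\<^sub>R vec 1) - snd p * (real CARD('n) - 2) / 2"
  by (simp add: lhs_def inner_diff_right inner_vec1 piv_sum[OF assms] algebra_simps add_divide_distrib diff_divide_distrib)

definition sgnv :: "real^'n \<Rightarrow> real^'n" where
  "sgnv w = (\<chi> i. if w$i \<ge> 0 then 1 else -1)"

lemma sgnv_in: "sgnv w \<in> signvecs"
  by (simp add: sgnv_def signvecs_def)

lemma sgnv_inner: "sgnv w \<bullet> w = (\<Sum>i\<in>UNIV. \<bar>w$i\<bar>)"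
  by (simp add: inner_vec_def sgnv_def) (rule sum.cong, auto)

lemma signvec_inner_le:
  assumes "a \<in> signvecs" shows "a \<bullet> w \<le> (\<Sum>i\<in>UNIV. \<bar>w$i\<bar>)"
proof -
  have "a \<bullet> w = (\<Sum>i\<in>UNIV. a$i * w$i)" by (simp add: inner_vec_def)
  also have "\<dots> \<le> (\<Sum>i\<in>UNIV. \<bar>w$i\<bar>)"
    using assms by (intro sum_mono) (auto simp: signvecs_def, metis abs_ge_self abs_minus_cancel mult_1 mult_minus_left neg_le_iff_le abs_ge_minus_self)
  finally show ?thesis .
qed

lemma l1_iff: "(\<forall>a\<in>signvecs. a \<bullet> w \<le> c) \<longleftrightarrow> (\<Sum>i\<in>UNIV. \<bar>(w::real^'n)$i\<bar>) \<le> c"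
  using sgnv_in[of w] sgnv_inner[of w] signvec_inner_le[of _ w] by force

definition l1 :: "real^'n \<Rightarrow> real" where "l1 w = (\<Sum>i\<in>UNIV. \<bar>w$i\<bar>)"

lemma Qchar:
  "(p \<in> (Qpoly :: ((real^'n) \<times> real) set)) \<longleftrightarrow> 0 \<le> snd p \<and> snd p \<le> 2 \<and>
     l1 (fst p - (snd p / 2) *\<^sub>R vec 1) \<le> 1 + snd p * (real CARD('n) - 2) / 2"
proof -
  have "(\<forall>a\<in>signvecs. lhs a p \<le> 1) \<longleftrightarrow> (\<forall>a\<in>(signvecs::(real^'n) set). a \<bullet> (fst p - (snd p / 2) *\<^sub>R vec 1) \<le> 1 + snd p * (real CARD('n) - 2) / 2)"
    by (auto simp: lhs_formula algebra_simps)
  then show ?thesis unfolding Qpoly_def l1_def l1_iff by auto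
qed

lemma Q_polyhedron: "polyhedron (Qpoly :: ((real^'n) \<times> real) set)"
proof -
  have eq: "(Qpoly :: ((real^'n) \<times> real) set) =
     \<Inter> ((\<lambda>a. {p. (a, - piv a) \<bullet> p \<le> 1}) ` signvecs) \<inter> {p. (0::real^'n, -1::real) \<bullet> p \<le> 0}
       \<inter> {p. (0::real^'n, 1::real) \<bullet> p \<le> 2}"
    by (auto simp: Qpoly_def lhs_def inner_Pair_0 inner_Pair)
  show ?thesis unfolding eq
    by (intro polyhedron_Int polyhedron_Inter polyhedron_halfspace_le finite_imageI finite_signvecs) (auto intro: polyhedron_halfspace_le)
qed

lemma Q_bounded: "bounded (Qpoly :: ((real^'n) \<times> real) set)"
  unfolding bounded_iff
proof (intro exI ballI)
  fix p :: "(real^'n) \<times> real" assume "p \<in> Qpoly"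
  define t where "t = snd p"
  define w where "w = fst p - (t/2) *\<^sub>R (1::real^'n)"
  have Q: "0 \<le> t" "t \<le> 2" "l1 w \<le> 1 + t * (real CARD('n) - 2) / 2"
    using \<open>p \<in> Qpoly\<close> unfolding Qchar t_def w_def by auto
  have "norm p \<le> norm (fst p) + norm (snd p)" using norm_Pair_le[of "fst p" "snd p"] by simp
  also have "norm (fst p) \<le> (\<Sum>i\<in>UNIV. \<bar>fst p $ i\<bar>)" by (rule norm_le_l1_cart)
  also have "(\<Sum>i\<in>UNIV. \<bar>fst p $ i\<bar>) \<le> (\<Sum>i\<in>UNIV. \<bar>w $ i\<bar> + 1)"
    by (intro sum_mono) (use Q in \<open>auto simp: w_def\<close>)
  also have "\<dots> = l1 w + real CARD('n)" by (simp add: l1_def sum.distrib)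
  also have "l1 w \<le> real CARD('n) + 1"
  proof -
    have "t * (real CARD('n) - 2) \<le> t * real CARD('n)" using Q by (intro mult_left_mono) auto
    also have "\<dots> \<le> 2 * real CARD('n)" using Q by (intro mult_right_mono) auto
    finally have "t * (real CARD('n) - 2) / 2 \<le> 2 * (real CARD('n)) / 2" by simp
    then show ?thesis using Q by linarith
  qed
  finally show "norm p \<le> 2 * real CARD('n) + 3" using Q by (simp add: t_def)
qed

lemma Q_polytope: "polytope (Qpoly :: ((real^'n) \<times> real) set)"
  using Q_polyhedron Q_bounded polytope_eq_bounded_polyhedron by blast

lemma Q_convex: "convex (Qpoly :: ((real^'n) \<times> real) set)"
  using Q_polytope polytope_imp_convex by blast

lemma Q_compact: "compact (Qpoly :: ((real^'n) \<times> real) set)"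
  using Q_polytope polytope_imp_compact by blast

definition Uset :: "(real^'n) set" where
  "Uset = {s *\<^sub>R axis i 1 | s i. s = 1 \<or> s = -1}"

lemma cross_hull:
  fixes y :: "real^'n"
  assumes "l1 y \<le> 1"
  shows "y \<in> convex hull Uset"
proof -
  define N where "N = real CARD('n)"
  have N: "N > 0" by (simp add: N_def)
  define d where "d = 1 - l1 y"
  define mu where "mu = (\<lambda>(i::'n, s::real). max (s * y$i) 0 + d / (2*N))"
  define z where "z = (\<lambda>(i::'n, s::real). s *\<^sub>R axis i (1::real) :: real^'n)"
  let ?I = "(UNIV::'n set) \<times> {1, -1::real}"
  have sp: "\<And>g::'n\<times>real\<Rightarrow>'b::comm_monoid_add. sum g ?I = (\<Sum>i\<in>UNIV. g (i,1) + g (i,-1))"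
    by (simp add: sum.cartesian_product')
  have "(\<Sum>j\<in>?I. mu j *\<^sub>R z j) \<in> convex hull Uset"
  proof (rule convex_sum)
    show "finite ?I" by simp
    show "convex (convex hull Uset)" by simp
    have "sum mu ?I = (\<Sum>i\<in>UNIV. \<bar>y$i\<bar> + d / N)"
      unfolding sp by (intro sum.cong) (auto simp: mu_def)
    also have "\<dots> = l1 y + d" using N by (simp add: sum.distrib l1_def N_def)
    finally show "sum mu ?I = 1" by (simp add: d_def)
    have "d \<ge> 0" using assms by (simp add: d_def)
    then show "\<And>i. i \<in> ?I \<Longrightarrow> 0 \<le> mu i" using N by (auto simp: mu_def)
    show "\<And>i. i \<in> ?I \<Longrightarrow> z i \<in> convex hull Uset"
      by (rule hull_inc) (auto simp: z_def Uset_def)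
  qed
  moreover have "(\<Sum>j\<in>?I. mu j *\<^sub>R z j) = y"
  proof -
    have "(\<Sum>j\<in>?I. mu j *\<^sub>R z j) = (\<Sum>i\<in>UNIV. y$i *\<^sub>R axis i (1::real))"
      unfolding sp
    proof (intro sum.cong refl)
      fix i
      have "mu (i,1) - mu (i,-1) = y$i" by (simp add: mu_def)
      then show "mu (i, 1) *\<^sub>R z (i, 1) + mu (i, - 1) *\<^sub>R z (i, - 1) = y $ i *\<^sub>R axis i 1"
        by (simp add: z_def scaleR_diff_left[symmetric] algebra_simps)
    qed
    also have "\<dots> = y" using basis_expansion[of y] by (simp add: scalar_mult_eq_scaleR)
    finally show ?thesis .
  qed
  ultimately show ?thesis by simp
qed

definition V0 :: "((real^'n) \<times> real) set" where
  "V0 = {(s *\<^sub>R axis i 1, 0) | s i. s = 1 \<or> s = -1}"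
definition V2 :: "((real^'n) \<times> real) set" where
  "V2 = {(vec 1 + (s * (real CARD('n) - 1)) *\<^sub>R axis i 1, 2) | s i. s = 1 \<or> s = -1}"

lemma l1_scale: "l1 (c *\<^sub>R w) = \<bar>c\<bar> * l1 (w::real^'n)"
  by (simp add: l1_def abs_mult sum_distrib_left)

lemma l1_axis: "l1 (axis i 1 :: real^'n) = 1"
  by (simp add: l1_def axis_def if_distrib sum.delta cong: if_cong)

lemma l1_neg: "l1 (- w) = l1 (w::real^'n)"
  by (simp add: l1_def)

lemma V0_sub: "V0 \<subseteq> (Qpoly :: ((real^'n) \<times> real) set)"
  by (auto simp: V0_def Qchar l1_scale l1_axis l1_neg)

lemma V2_sub:
  assumes "CARD('n) \<ge> 2"
  shows "V2 \<subseteq> (Qpoly :: ((real^'n) \<times> real) set)"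
proof
  fix p :: "(real^'n) \<times> real" assume "p \<in> V2"
  then obtain s i where p: "p = (vec 1 + (s * (real CARD('n) - 1)) *\<^sub>R axis i 1, 2)" and s: "s = 1 \<or> s = -1"
    by (auto simp: V2_def)
  have "l1 ((s * (real CARD('n) - 1)) *\<^sub>R axis i 1 :: real^'n) = real CARD('n) - 1"
    using s assms by (auto simp: l1_scale l1_axis)
  then show "p \<in> Qpoly" unfolding Qchar p by (simp add: field_simps)
qed

lemma V0_img: "(V0 :: ((real^'n) \<times> real) set) = (\<lambda>y. (y, 0)) ` Uset"
  by (auto simp: V0_def Uset_def)

lemma V2_img: "(V2 :: ((real^'n) \<times> real) set) = (\<lambda>z. (1, 2) + (real CARD('n) - 1) *\<^sub>R z) ` V0"
proof
  let ?f = "\<lambda>z::(real^'n) \<times> real. (1, 2) + (real CARD('n) - 1) *\<^sub>R z"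
  show "V2 \<subseteq> ?f ` V0"
  proof
    fix p assume "p \<in> (V2 :: ((real^'n) \<times> real) set)"
    then obtain s i where p: "p = (vec 1 + (s * (real CARD('n) - 1)) *\<^sub>R axis i 1, 2)" and s: "s = 1 \<or> s = -1"
      by (auto simp: V2_def)
    have "p = ?f (s *\<^sub>R axis i 1, 0)" by (simp add: p algebra_simps)
    moreover have "(s *\<^sub>R axis i 1, 0) \<in> V0" using s by (auto simp: V0_def)
    ultimately show "p \<in> ?f ` V0" by blast
  qed
  show "?f ` V0 \<subseteq> V2"
  proof
    fix p assume "p \<in> ?f ` V0"
    then obtain q where q: "q \<in> V0" and pq: "p = ?f q" by blast
    from q obtain s i where qq: "q = (s *\<^sub>R axis i 1, 0)" and s: "s = 1 \<or> s = -1"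
      by (auto simp: V0_def)
    have p: "p = ?f (s *\<^sub>R axis i 1, 0)" using pq qq by simp
    have "p = (vec 1 + (s * (real CARD('n) - 1)) *\<^sub>R axis i 1, 2)" by (simp add: p algebra_simps)
    then show "p \<in> V2" using s unfolding V2_def by blast
  qed
qed

lemma ext_sub: "x extreme_point_of S \<Longrightarrow> x \<in> T \<Longrightarrow> T \<subseteq> S \<Longrightarrow> x extreme_point_of T"
  by (auto simp: extreme_point_of_def)

lemma linear_pair0: "linear (\<lambda>y::real^'n. (y, 0::real))"
  by (simp add: linear_iff)

lemma hullV0: "convex hull (V0 :: ((real^'n) \<times> real) set) = (\<lambda>y. (y, 0)) ` (convex hull Uset)"
  unfolding V0_img by (rule convex_hull_linear_image[OF linear_pair0, symmetric])

lemma hullV2: "convex hull (V2 :: ((real^'n) \<times> real) set) =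
   (\<lambda>z. (1, 2) + (real CARD('n) - 1) *\<^sub>R z) ` (convex hull V0)"
  unfolding V2_img by (rule convex_hull_affinity)

lemma ext_in:
  assumes n2: "CARD('n) \<ge> 2"
    and ext: "v extreme_point_of (Qpoly :: ((real^'n) \<times> real) set)"
  shows "v \<in> V0 \<union> V2"
proof -
  define N where "N = real CARD('n)"
  have N2: "N \<ge> 2" using n2 by (simp add: N_def)
  obtain x t where v: "v = (x, t)" by (cases v)
  have vQ: "v \<in> Qpoly" using ext by (simp add: extreme_point_of_def)
  define w where "w = x - (t/2) *\<^sub>R (1::real^'n)"
  have Q: "0 \<le> t" "t \<le> 2" "l1 w \<le> 1 + t * (N - 2) / 2"
    using vQ unfolding Qchar v w_def N_def by auto
  consider "t = 0" | "t = 2" | "0 < t \<and> t < 2" using Q by linarith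
  then show ?thesis
  proof cases
    case 1
    then have "l1 x \<le> 1" using Q by (simp add: w_def)
    then have "x \<in> convex hull Uset" by (rule cross_hull)
    then have vh: "v \<in> convex hull V0" unfolding hullV0 v 1 by blast
    have "convex hull V0 \<subseteq> (Qpoly :: ((real^'n) \<times> real) set)"
      using V0_sub Q_convex by (rule hull_minimal)
    then have "v extreme_point_of convex hull V0" using ext_sub[OF ext vh] by blast
    then show ?thesis using extreme_point_of_convex_hull by blast
  next
    case 2
    define y where "y = (1 / (N - 1)) *\<^sub>R w"
    have "l1 w \<le> N - 1" using Q 2 by (simp add: field_simps)
    then have "l1 y \<le> 1" using N2 by (simp add: y_def l1_scale field_simps)
    then have "y \<in> convex hull Uset" by (rule cross_hull)
    then have "(y, 0) \<in> convex hull V0" unfolding hullV0 by blast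
    moreover have "v = (1, 2) + (N - 1) *\<^sub>R (y, 0)"
      using N2 by (simp add: v 2 y_def w_def)
    ultimately have vh: "v \<in> convex hull V2" unfolding hullV2 N_def by blast
    have "convex hull V2 \<subseteq> (Qpoly :: ((real^'n) \<times> real) set)"
      using V2_sub[OF n2] Q_convex by (rule hull_minimal)
    then have "v extreme_point_of convex hull V2" using ext_sub[OF ext vh] by blast
    then show ?thesis using extreme_point_of_convex_hull by blast
  next
    case 3
    define r where "r = 1 + t * (N - 2) / 2"
    have r1: "r \<ge> 1" using Q N2 by (simp add: r_def)
    define k where "k = (N - 1) / r"
    define p0 where "p0 = ((1 / r) *\<^sub>R w, 0::real)"
    define p2 where "p2 = (1 + k *\<^sub>R w, 2::real)"
    have p0Q: "p0 \<in> Qpoly"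
    proof -
      have "l1 ((1/r) *\<^sub>R w) \<le> 1" using Q r1 by (simp add: l1_scale r_def field_simps)
      then show ?thesis unfolding Qchar p0_def by simp
    qed
    have p2Q: "p2 \<in> Qpoly"
    proof -
      have "k * l1 w \<le> k * r" using Q N2 r1 by (intro mult_left_mono) (auto simp: k_def r_def)
      also have "k * r = N - 1" using r1 by (simp add: k_def)
      finally have "l1 (k *\<^sub>R w) \<le> N - 1" using N2 r1 by (simp add: l1_scale k_def)
      then show ?thesis unfolding Qchar p2_def N_def by (simp add: field_simps)
    qed
    have cr: "(1 - t/2) + (t/2)*(N-1) = r" by (simp add: r_def algebra_simps diff_divide_distrib)
    have "(1 - t/2) * (1/r) + (t/2) * k = ((1 - t/2) + (t/2)*(N-1)) / r"
      by (simp add: k_def add_divide_distrib)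
    then have coef: "(1 - t/2) * (1/r) + (t/2) * k = 1" using cr r1 by simp
    have "v = (1 - t/2) *\<^sub>R p0 + (t/2) *\<^sub>R p2"
    proof -
      have "(1 - t/2) *\<^sub>R ((1/r) *\<^sub>R w) + (t/2) *\<^sub>R (1 + k *\<^sub>R w)
            = ((1 - t/2) * (1/r) + (t/2) * k) *\<^sub>R w + (t/2) *\<^sub>R (1::real^'n)"
        by (simp add: algebra_simps)
      also have "\<dots> = x" using coef by (simp add: w_def)
      finally show ?thesis by (simp add: v p0_def p2_def prod_eq_iff algebra_simps)
    qed
    moreover have "p0 \<noteq> p2" by (simp add: p0_def p2_def)
    ultimately have "v \<in> open_segment p0 p2" using 3 unfolding in_segment by (auto intro!: exI[of _ "t/2"])
    then have False using ext p0Q p2Q by (auto simp: extreme_point_of_def)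
    then show ?thesis ..
  qed
qed

lemma aa: "axis i (1::real) \<bullet> (axis j 1 :: real^'n) = (if i = j then 1 else 0)"
  using cart_eq_inner_axis[of "axis i (1::real)" j] by (auto simp: axis_def)

lemma a1: "axis i (1::real) \<bullet> (1::real^'n) = 1"
  using cart_eq_inner_axis[of "1::real^'n" i] by (simp add: inner_commute)

lemma ia1: "(s *\<^sub>R axis i (1::real)) \<bullet> (s' *\<^sub>R axis j 1 :: real^'n) = (if i = j then s * s' else 0)"
  by (simp add: aa)

lemma ia2: "(s *\<^sub>R axis i (1::real)) \<bullet> (1 + c *\<^sub>R axis j 1 :: real^'n) = s + (if i = j then s * c else 0)"
  by (simp add: inner_add_right aa a1)

lemma finite_V0: "finite (V0 :: ((real^'n) \<times> real) set)"
proof -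
  have eq: "(V0 :: ((real^'n) \<times> real) set) = (\<lambda>(s,i). (s *\<^sub>R axis i 1, 0)) ` ({1,-1::real} \<times> UNIV)"
    by (auto simp: V0_def image_iff)
  have "finite ({1,-1::real} \<times> (UNIV::'n set))" by (intro finite_cartesian_product) auto
  then show ?thesis unfolding eq by (rule finite_imageI)
qed

lemma finite_V2: "finite (V2 :: ((real^'n) \<times> real) set)"
  unfolding V2_img using finite_V0 by (rule finite_imageI)

lemma sep:
  assumes n2: "CARD('n) \<ge> 2" and v: "v \<in> (V0 \<union> V2 :: ((real^'n) \<times> real) set)"
  shows "v \<notin> convex hull ((V0 \<union> V2) - {v})"
proof -
  define N where "N = real CARD('n)"
  have N2: "N \<ge> 2" using n2 by (simp add: N_def)
  have "\<exists>c. \<forall>u \<in> V0 \<union> V2. u \<noteq> v \<longrightarrow> c \<bullet> u < c \<bullet> v"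
  proof (cases "v \<in> V0")
    case True
    then obtain s i where vv: "v = (s *\<^sub>R axis i 1, 0)" and s: "s = 1 \<or> s = -1" by (auto simp: V0_def)
    show ?thesis
    proof (intro exI ballI impI)
      fix u assume u: "u \<in> V0 \<union> V2" "u \<noteq> v"
      let ?c = "(s *\<^sub>R axis i (1::real) :: real^'n, - N)"
      have cv: "?c \<bullet> v = 1" using s by (auto simp: vv inner_Pair ia1 aa)
      from u(1) show "?c \<bullet> u < ?c \<bullet> v"
      proof
        assume "u \<in> V0"
        then obtain s' j where uu: "u = (s' *\<^sub>R axis j 1, 0)" and s': "s' = 1 \<or> s' = -1" by (auto simp: V0_def)
        have cu: "?c \<bullet> u = (if i = j then s * s' else 0)" by (simp add: uu inner_Pair ia1 aa)
        have "i = j \<Longrightarrow> s \<noteq> s'" using u(2) by (auto simp: uu vv)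
        then have "(if i = j then s * s' else 0) < 1" using s s' by auto
        then show ?thesis unfolding cv cu .
      next
        assume "u \<in> V2"
        then obtain s' j where uu: "u = (1 + (s' * (N - 1)) *\<^sub>R axis j 1, 2)" and s': "s' = 1 \<or> s' = -1"
          by (auto simp: V2_def N_def)
        have cu: "?c \<bullet> u = s + (if i = j then s * (s' * (N - 1)) else 0) - 2 * N"
          by (simp add: uu inner_Pair ia2 aa a1 inner_add_right)
        have "s + (if i = j then s * (s' * (N - 1)) else 0) - 2 * N < 1" using s s' N2 by auto
        then show ?thesis unfolding cv cu .
      qed
    qed
  next
    case False
    then have "v \<in> V2" using v by blast
    then obtain s i where vv: "v = (1 + (s * (N - 1)) *\<^sub>R axis i 1, 2)" and s: "s = 1 \<or> s = -1"
      by (auto simp: V2_def N_def)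
    show ?thesis
    proof (intro exI ballI impI)
      fix u assume u: "u \<in> V0 \<union> V2" "u \<noteq> v"
      let ?c = "(s *\<^sub>R axis i (1::real) :: real^'n, 1::real)"
      have cv: "?c \<bullet> v = s + N + 1" using s by (auto simp: vv inner_Pair ia2 aa a1 inner_add_right)
      from u(1) show "?c \<bullet> u < ?c \<bullet> v"
      proof
        assume "u \<in> V0"
        then obtain s' j where uu: "u = (s' *\<^sub>R axis j 1, 0)" and s': "s' = 1 \<or> s' = -1" by (auto simp: V0_def)
        have cu: "?c \<bullet> u = (if i = j then s * s' else 0)" by (simp add: uu inner_Pair ia1 aa)
        have "(if i = j then s * s' else 0) < s + N + 1" using s s' N2 by auto
        then show ?thesis unfolding cv cu .
      next
        assume "u \<in> V2"
        then obtain s' j where uu: "u = (1 + (s' * (N - 1)) *\<^sub>R axis j 1, 2)" and s': "s' = 1 \<or> s' = -1"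
          by (auto simp: V2_def N_def)
        have cu: "?c \<bullet> u = s + (if i = j then s * (s' * (N - 1)) else 0) + 2"
          by (simp add: uu inner_Pair ia2 aa a1 inner_add_right)
        have "i = j \<Longrightarrow> s \<noteq> s'" using u(2) by (auto simp: uu vv)
        then have "s + (if i = j then s * (s' * (N - 1)) else 0) + 2 < s + N + 1" using s s' N2 by auto
        then show ?thesis unfolding cv cu .
      qed
    qed
  qed
  then obtain c where c: "\<forall>u \<in> V0 \<union> V2. u \<noteq> v \<longrightarrow> c \<bullet> u < c \<bullet> v" by blast
  have "convex hull ((V0 \<union> V2) - {v}) \<subseteq> {z. c \<bullet> z < c \<bullet> v}"
    by (rule hull_minimal) (use c convex_halfspace_lt in auto)
  then show ?thesis by auto
qed

lemma ext_eq:
  assumes n2: "CARD('n) \<ge> 2"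
  shows "{v. v extreme_point_of (Qpoly :: ((real^'n) \<times> real) set)} = V0 \<union> V2"
proof
  show "{v. v extreme_point_of (Qpoly :: ((real^'n) \<times> real) set)} \<subseteq> V0 \<union> V2"
    using ext_in[OF n2] by blast
  have sub: "V0 \<union> V2 \<subseteq> (Qpoly :: ((real^'n) \<times> real) set)" using V0_sub V2_sub[OF n2] by blast
  have "(Qpoly :: ((real^'n) \<times> real) set) = convex hull {v. v extreme_point_of Qpoly}"
    by (rule Krein_Milman_Minkowski[OF Q_compact Q_convex])
  also have "\<dots> \<subseteq> convex hull (V0 \<union> V2)"
    by (rule hull_mono) (use ext_in[OF n2] in blast)
  finally have QH: "(Qpoly :: ((real^'n) \<times> real) set) = convex hull (V0 \<union> V2)"
    using hull_minimal[of "V0 \<union> V2" Qpoly convex] sub Q_convex by blast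
  show "V0 \<union> V2 \<subseteq> {v. v extreme_point_of (Qpoly :: ((real^'n) \<times> real) set)}"
  proof
    fix v assume v: "v \<in> (V0 \<union> V2 :: ((real^'n) \<times> real) set)"
    have "v extreme_point_of convex hull (insert v ((V0 \<union> V2) - {v}))"
      by (rule extreme_point_of_convex_hull_insert) (use finite_V0 finite_V2 sep[OF n2 v] in auto)
    moreover have "insert v ((V0 \<union> V2) - {v}) = V0 \<union> V2" using v by blast
    ultimately show "v \<in> {v. v extreme_point_of Qpoly}" using QH by simp
  qed
qed

lemma integral_V:
  assumes "v \<in> (V0 \<union> V2 :: ((real^'n) \<times> real) set)"
  shows "integral_pt v"
  using assms
proof
  assume "v \<in> V0"
  then obtain s i where v: "v = (s *\<^sub>R axis i 1, 0)" and s: "s = 1 \<or> s = -1" by (auto simp: V0_def)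
  have "fst v $ j \<in> \<int>" for j
    using s by (cases "j = i") (auto simp: v axis_def)
  then show ?thesis by (simp add: integral_pt_def v)
next
  assume "v \<in> V2"
  then obtain s i where v: "v = (vec 1 + (s * (real CARD('n) - 1)) *\<^sub>R axis i 1, 2)" and s: "s = 1 \<or> s = -1"
    by (auto simp: V2_def)
  have N: "real CARD('n) - 1 \<in> \<int>" by simp
  have "fst v $ j \<in> \<int>" for j
  proof (cases "j = i")
    case True
    have "fst v $ j = 1 + s * (real CARD('n) - 1)" using True by (simp add: v axis_def)
    then show ?thesis using s N by (auto intro!: Ints_add Ints_mult Ints_minus)
  next
    case False
    then show ?thesis by (simp add: v axis_def)
  qed
  then show ?thesis by (simp add: integral_pt_def v)
qed

lemma lhs_inner: "lhs a p = (a, - piv a) \<bullet> p"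
  by (cases p) (simp add: lhs_def inner_Pair)

lemma open_lhs:
  assumes "finite B"
  shows "open {q::(real^'n) \<times> real. \<forall>b\<in>B. lhs b q < 1}"
proof -
  have "{q::(real^'n) \<times> real. \<forall>b\<in>B. lhs b q < 1} = (\<Inter>b\<in>B. {q. lhs b q < 1})" by auto
  moreover have "open {q::(real^'n) \<times> real. lhs b q < 1}" for b
    unfolding lhs_def by (intro open_Collect_less continuous_intros)
  ultimately show ?thesis using assms by (simp add: open_INT)
qed

lemma open_snd_gt: "open {q::(real^'n) \<times> real. 0 < snd q}"
  by (intro open_Collect_less continuous_intros)
lemma open_snd_lt: "open {q::(real^'n) \<times> real. snd q < 2}"
  by (intro open_Collect_less continuous_intros)

lemma piv_ge: "piv a \<ge> -1"
  by (simp add: piv_def)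

definition T0set :: "((real^'n) \<times> real) set" where
  "T0set = {q. (\<forall>b\<in>signvecs. lhs b q < 1) \<and> 0 < snd q \<and> snd q < 2}"

lemma T0_props: "T0set \<subseteq> (Qpoly :: ((real^'n) \<times> real) set)" "open (T0set :: ((real^'n) \<times> real) set)"
  "(T0set :: ((real^'n) \<times> real) set) \<noteq> {}"
proof -
  show "T0set \<subseteq> (Qpoly :: ((real^'n) \<times> real) set)" unfolding T0set_def Qpoly_def by (auto intro: less_imp_le)
  have eq: "(T0set :: ((real^'n) \<times> real) set) = {q::(real^'n) \<times> real. \<forall>b\<in>signvecs. lhs b q < 1} \<inter> {q. 0 < snd q} \<inter> {q. snd q < 2}"
    by (auto simp: T0set_def)
  show "open (T0set :: ((real^'n) \<times> real) set)"
    unfolding eq by (intro open_Int open_lhs finite_signvecs open_snd_gt open_snd_lt)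
  have "(0, 1/2) \<in> (T0set :: ((real^'n) \<times> real) set)"
  proof -
    have "lhs b (0::real^'n, 1/2) < 1" for b :: "real^'n"
      using piv_ge[of b] by (simp add: lhs_def)
    then show ?thesis by (simp add: T0set_def)
  qed
  then show "(T0set :: ((real^'n) \<times> real) set) \<noteq> {}" by blast
qed

lemma facet_gen:
  fixes S :: "'a::euclidean_space set"
  assumes cS: "convex S" and T0: "T0 \<subseteq> S" "open T0" "T0 \<noteq> {}"
    and c: "c \<noteq> 0" and sup: "\<forall>x\<in>S. c \<bullet> x \<le> \<beta>"
    and T: "open T" "p0 \<in> T" "c \<bullet> p0 = \<beta>" "T \<inter> {x. c \<bullet> x = \<beta>} \<subseteq> S"
  shows "{x\<in>S. c \<bullet> x = \<beta>} facet_of S \<and> p0 \<in> rel_interior {x\<in>S. c \<bullet> x = \<beta>}"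
proof -
  let ?H = "{x. c \<bullet> x = \<beta>}"
  have Feq: "{x\<in>S. c \<bullet> x = \<beta>} = S \<inter> ?H" by blast
  have face: "{x\<in>S. c \<bullet> x = \<beta>} face_of S"
    unfolding Feq by (rule face_of_Int_supporting_hyperplane_le) (use cS sup in auto)
  have p0F: "p0 \<in> {x\<in>S. c \<bullet> x = \<beta>}" using T by blast
  have dS: "aff_dim S = int DIM('a)"
    using aff_dim_open[OF T0(2,3)] aff_dim_subset[OF T0(1)] aff_dim_le_DIM[of S] by linarith
  have dH: "aff_dim ?H = int DIM('a) - 1"
    using aff_dim_hyperplane[OF c, of \<beta>] by (simp add: of_nat_diff DIM_positive Suc_leI)
  have "aff_dim (?H \<inter> T) = aff_dim ?H"
    by (rule aff_dim_convex_Int_open) (use T convex_hyperplane in auto)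
  moreover have "?H \<inter> T \<subseteq> {x\<in>S. c \<bullet> x = \<beta>}" using T by blast
  moreover have "{x\<in>S. c \<bullet> x = \<beta>} \<subseteq> ?H" by blast
  ultimately have "aff_dim {x\<in>S. c \<bullet> x = \<beta>} = aff_dim ?H"
    using aff_dim_subset[of "?H \<inter> T" "{x\<in>S. c \<bullet> x = \<beta>}"] aff_dim_subset[of "{x\<in>S. c \<bullet> x = \<beta>}" ?H]
    by linarith
  then have facet: "{x\<in>S. c \<bullet> x = \<beta>} facet_of S"
    unfolding facet_of_def using face p0F dS dH by auto
  obtain e where e: "e > 0" "ball p0 e \<subseteq> T" using T open_contains_ball by blast
  have "affine hull {x\<in>S. c \<bullet> x = \<beta>} \<subseteq> ?H"
    by (rule hull_minimal) (auto simp: affine_hyperplane)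
  then have "ball p0 e \<inter> affine hull {x\<in>S. c \<bullet> x = \<beta>} \<subseteq> {x\<in>S. c \<bullet> x = \<beta>}"
    using e T by blast
  then have "p0 \<in> rel_interior {x\<in>S. c \<bullet> x = \<beta>}"
    unfolding mem_rel_interior_ball using p0F e by blast
  with facet show ?thesis by blast
qed

lemma interior_noint:
  assumes pI: "p \<in> interior (Qpoly :: ((real^'n) \<times> real) set)" and ip: "integral_pt p"
  shows False
proof -
  define N where "N = real CARD('n)"
  obtain x t where p: "p = (x, t)" by (cases p)
  obtain e where e: "e > 0" "ball p e \<subseteq> Qpoly" using pI mem_interior by blast
  have "(x, t + e/2) \<in> ball p e" using e by (simp add: p dist_norm)
  then have "(x, t + e/2) \<in> Qpoly" using e by blast
  then have t2: "t + e/2 \<le> 2" by (simp add: Qpoly_def)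
  have "(x, t - e/2) \<in> ball p e" using e by (simp add: p dist_norm)
  then have "(x, t - e/2) \<in> Qpoly" using e by blast
  then have t0: "0 \<le> t - e/2" by (simp add: Qpoly_def)
  have "t \<in> \<int>" using ip by (simp add: integral_pt_def p)
  then obtain k where k: "t = of_int k" by (auto elim: Ints_cases)
  have "0 < k" "k < 2" using t0 t2 e k by linarith+
  then have t1: "t = 1" using k by simp
  define w where "w = x - (1/2) *\<^sub>R (1::real^'n)"
  define a where "a = sgnv w"
  have xi: "x $ j \<in> \<int>" for j using ip by (simp add: integral_pt_def p)
  have wj: "\<bar>w $ j\<bar> \<ge> 1/2" for j
  proof -
    obtain m where "x $ j = of_int m" using xi[of j] by (auto elim: Ints_cases)
    then show ?thesis by (cases "m \<ge> 1") (auto simp: w_def)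
  qed
  have "l1 w \<ge> N / 2"
  proof -
    have "(\<Sum>j\<in>(UNIV::'n set). (1/2::real)) \<le> (\<Sum>j\<in>UNIV. \<bar>w $ j\<bar>)" by (rule sum_mono) (rule wj)
    then show ?thesis by (simp add: l1_def N_def)
  qed
  obtain i :: 'n where True by blast
  define q where "q = (x + (a$i * (e/2)) *\<^sub>R axis i (1::real), t)"
  have ai: "a$i = 1 \<or> a$i = -1" by (simp add: a_def sgnv_def)
  have "dist p q = e/2"
    using ai e by (auto simp: p q_def dist_norm)
  then have "q \<in> Qpoly" using e by auto
  then have "l1 (fst q - (t/2) *\<^sub>R 1) \<le> 1 + t * (N - 2) / 2" unfolding Qchar N_def by (simp add: q_def)
  then have lq: "l1 (w + (a$i * (e/2)) *\<^sub>R axis i 1) \<le> N / 2"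
    using t1 by (simp add: q_def w_def algebra_simps diff_divide_distrib)
  have "a \<bullet> (w + (a$i * (e/2)) *\<^sub>R axis i 1) = l1 w + (a$i * a$i) * (e/2)"
    by (simp add: a_def inner_add_right sgnv_inner l1_def inner_axis)
  also have "\<dots> = l1 w + e/2" using ai by auto
  finally have "a \<bullet> (w + (a$i * (e/2)) *\<^sub>R axis i 1) > N/2" using \<open>l1 w \<ge> N/2\<close> e by linarith
  moreover have "a \<bullet> (w + (a$i * (e/2)) *\<^sub>R axis i 1) \<le> l1 (w + (a$i * (e/2)) *\<^sub>R axis i 1)"
    using signvec_inner_le[OF sgnv_in] unfolding a_def l1_def .
  ultimately show False using lq by linarith
qed

definition pa :: "real^'n \<Rightarrow> (real^'n) \<times> real" where
  "pa a = ((\<chi> j. (a$j + 1) / 2), 1)"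

lemma pa_w: "fst (pa a) - (snd (pa a) / 2) *\<^sub>R vec 1 = (1/2) *\<^sub>R (a::real^'n)"
  by (simp add: pa_def vec_eq_iff field_simps)

lemma self_inner:
  fixes a :: "real^'n"
  assumes "a \<in> signvecs" shows "a \<bullet> a = real CARD('n)"
proof -
  have "a \<bullet> a = (\<Sum>j\<in>UNIV. a$j * a$j)" by (simp add: inner_vec_def)
  also have "\<dots> = (\<Sum>j\<in>(UNIV::'n set). 1)"
  proof (rule sum.cong)
    fix j have "a$j = 1 \<or> a$j = -1" using assms by (simp add: signvecs_def)
    then show "a$j * a$j = 1" by auto
  qed simp
  finally show ?thesis by simp
qed

lemma other_inner:
  fixes a b :: "real^'n"
  assumes "a \<in> signvecs" "b \<in> signvecs" "b \<noteq> a"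
  shows "b \<bullet> a \<le> real CARD('n) - 2"
proof -
  obtain j where j: "b$j \<noteq> a$j" using assms(3) by (auto simp: vec_eq_iff)
  have ab: "\<And>k. (a$k = 1 \<or> a$k = -1) \<and> (b$k = 1 \<or> b$k = -1)" using assms(1,2) by (simp add: signvecs_def)
  have pm: "\<And>k. a$k * b$k \<le> 1" proof -
    fix k show "a$k * b$k \<le> 1" using ab[of k] by auto
  qed
  have jj: "b$j * a$j = -1" using ab[of j] j by auto
  have "b \<bullet> a = (\<Sum>k\<in>UNIV. b$k * a$k)" by (simp add: inner_vec_def)
  also have "\<dots> = b$j * a$j + (\<Sum>k\<in>UNIV - {j}. b$k * a$k)"
    by (simp add: sum.remove)
  also have "(\<Sum>k\<in>UNIV - {j}. b$k * a$k) \<le> of_nat (card (UNIV - {j} :: 'n set)) * 1"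
    by (rule sum_bounded_above) (use pm in \<open>auto simp: mult.commute\<close>)
  also have "card (UNIV - {j} :: 'n set) = CARD('n) - 1" by (simp add: card_Diff_singleton)
  finally show ?thesis using jj by (simp add: of_nat_diff)
qed

lemma pa_props:
  fixes a :: "real^'n"
  assumes a: "a \<in> signvecs"
  shows "integral_pt (pa a)" "lhs a (pa a) = 1"
        "\<And>b. b \<in> signvecs \<Longrightarrow> b \<noteq> a \<Longrightarrow> lhs b (pa a) \<le> 0"
        "snd (pa a) = 1"
proof -
  have "fst (pa a) $ j \<in> \<int>" for j using a by (auto simp: pa_def signvecs_def elim!: allE[of _ j])
  then show "integral_pt (pa a)" by (simp add: integral_pt_def pa_def)
  show "lhs a (pa a) = 1"
    using self_inner[OF a] unfolding lhs_formula[OF a] pa_w by (simp add: pa_def field_simps)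
  show "lhs b (pa a) \<le> 0" if "b \<in> signvecs" "b \<noteq> a" for b
    using other_inner[OF a that] unfolding lhs_formula[OF that(1)] pa_w by (simp add: pa_def field_simps)
  show "snd (pa a) = 1" by (simp add: pa_def)
qed

lemma signvec_nz: "a \<in> signvecs \<Longrightarrow> (a::real^'n) \<noteq> 0"
proof
  assume "a \<in> signvecs" "a = 0"
  obtain i :: 'n where True by blast
  have "a$i = 1 \<or> a$i = -1" using \<open>a \<in> signvecs\<close> by (simp add: signvecs_def)
  then show False using \<open>a = 0\<close> by auto
qed

lemma facet_a:
  fixes a :: "real^'n"
  assumes a: "a \<in> signvecs"
  shows "{p \<in> Qpoly. lhs a p = 1} facet_of Qpoly \<and> (\<exists>p \<in> rel_interior {p \<in> Qpoly. lhs a p = 1}. integral_pt p)"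
proof -
  define T where "T = {q::(real^'n) \<times> real. (\<forall>b\<in>signvecs - {a}. lhs b q < 1) \<and> 0 < snd q \<and> snd q < 2}"
  have Teq: "T = {q::(real^'n) \<times> real. \<forall>b\<in>signvecs - {a}. lhs b q < 1} \<inter> {q. 0 < snd q} \<inter> {q. snd q < 2}"
    by (auto simp: T_def)
  have oT: "open T" unfolding Teq
    by (intro open_Int open_lhs open_snd_gt open_snd_lt) (simp add: finite_signvecs)
  have "lhs b (pa a) < 1" if "b \<in> signvecs - {a}" for b
    using pa_props(3)[OF a, of b] that by force
  then have pT: "pa a \<in> T" using pa_props(4)[OF a] by (auto simp: T_def)
  have seq: "{p \<in> Qpoly. lhs a p = 1} = {x \<in> Qpoly. (a, - piv a) \<bullet> x = 1}" by (simp add: lhs_inner)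
  have "{x \<in> Qpoly. (a, - piv a) \<bullet> x = 1} facet_of Qpoly \<and> pa a \<in> rel_interior {x \<in> Qpoly. (a, - piv a) \<bullet> x = 1}"
  proof (rule facet_gen[OF Q_convex T0_props])
    show "(a, - piv a) \<noteq> 0" using signvec_nz[OF a] by (simp add: zero_prod_def)
    show "\<forall>x\<in>Qpoly. (a, - piv a) \<bullet> x \<le> 1" using a by (auto simp: Qpoly_def lhs_inner[symmetric])
    show "open T" by (rule oT)
    show "pa a \<in> T" by (rule pT)
    show "(a, - piv a) \<bullet> pa a = 1" using pa_props(2)[OF a] by (simp add: lhs_inner)
    show "T \<inter> {x. (a, - piv a) \<bullet> x = 1} \<subseteq> Qpoly"
      by (auto simp: T_def Qpoly_def lhs_inner[symmetric] intro: less_imp_le)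
  qed
  then show ?thesis unfolding seq using pa_props(1)[OF a] by blast
qed

lemma facet_0:
  "{p \<in> (Qpoly :: ((real^'n) \<times> real) set). snd p = 0} facet_of Qpoly
     \<and> (\<exists>p \<in> rel_interior {p \<in> (Qpoly :: ((real^'n) \<times> real) set). snd p = 0}. integral_pt p)"
proof -
  define T where "T = {q::(real^'n) \<times> real. (\<forall>b\<in>signvecs. lhs b q < 1) \<and> snd q < 2}"
  have Teq: "T = {q::(real^'n) \<times> real. \<forall>b\<in>signvecs. lhs b q < 1} \<inter> {q. snd q < 2}"
    by (auto simp: T_def)
  have oT: "open T" unfolding Teq
    by (intro open_Int open_lhs open_snd_lt finite_signvecs)
  have pT: "(0, 0) \<in> T" by (simp add: T_def lhs_def)
  have seq: "{p \<in> (Qpoly :: ((real^'n) \<times> real) set). snd p = 0} = {x \<in> Qpoly. (0::real^'n, -1::real) \<bullet> x = 0}"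
    by (auto simp: inner_Pair_0)
  have "{x \<in> Qpoly. (0::real^'n, -1::real) \<bullet> x = 0} facet_of Qpoly \<and> (0,0) \<in> rel_interior {x \<in> Qpoly. (0::real^'n, -1::real) \<bullet> x = 0}"
  proof (rule facet_gen[OF Q_convex T0_props])
    show "(0::real^'n, -1::real) \<noteq> 0" by (simp add: zero_prod_def)
    show "\<forall>x\<in>Qpoly. (0::real^'n, -1::real) \<bullet> x \<le> 0" by (auto simp: Qpoly_def inner_Pair_0)
    show "open T" by (rule oT)
    show "(0, 0) \<in> T" by (rule pT)
    show "(0::real^'n, -1::real) \<bullet> (0, 0) = 0" by simp
    show "T \<inter> {x. (0::real^'n, -1::real) \<bullet> x = 0} \<subseteq> Qpoly"
      by (auto simp: T_def Qpoly_def inner_Pair_0 intro: less_imp_le)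
  qed
  moreover have "integral_pt ((0::real^'n), (0::real))" by (simp add: integral_pt_def)
  ultimately show ?thesis unfolding seq by blast
qed

lemma lhs_top:
  fixes b :: "real^'n"
  assumes "b \<in> signvecs" "CARD('n) \<ge> 2"
  shows "lhs b (vec 1, 2) < 1"
proof -
  have "lhs b (vec 1, 2) = - (real CARD('n) - 2)" by (simp add: lhs_formula[OF assms(1)] field_simps)
  then show ?thesis using assms(2) by simp
qed

lemma facet_2:
  assumes n2: "CARD('n) \<ge> 2"
  shows "{p \<in> (Qpoly :: ((real^'n) \<times> real) set). snd p = 2} facet_of Qpoly
     \<and> (\<exists>p \<in> rel_interior {p \<in> (Qpoly :: ((real^'n) \<times> real) set). snd p = 2}. integral_pt p)"
proof -
  define T where "T = {q::(real^'n) \<times> real. (\<forall>b\<in>signvecs. lhs b q < 1) \<and> 0 < snd q}"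
  have Teq: "T = {q::(real^'n) \<times> real. \<forall>b\<in>signvecs. lhs b q < 1} \<inter> {q. 0 < snd q}"
    by (auto simp: T_def)
  have oT: "open T" unfolding Teq
    by (intro open_Int open_lhs open_snd_gt finite_signvecs)
  have pT: "(vec 1, 2) \<in> T" using lhs_top[OF _ n2] by (simp add: T_def)
  have seq: "{p \<in> (Qpoly :: ((real^'n) \<times> real) set). snd p = 2} = {x \<in> Qpoly. (0::real^'n, 1::real) \<bullet> x = 2}"
    by (auto simp: inner_Pair_0)
  have "{x \<in> Qpoly. (0::real^'n, 1::real) \<bullet> x = 2} facet_of Qpoly \<and> (vec 1, 2) \<in> rel_interior {x \<in> Qpoly. (0::real^'n, 1::real) \<bullet> x = 2}"
  proof (rule facet_gen[OF Q_convex T0_props])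
    show "(0::real^'n, 1::real) \<noteq> 0" by (simp add: zero_prod_def)
    show "\<forall>x\<in>Qpoly. (0::real^'n, 1::real) \<bullet> x \<le> 2" by (auto simp: Qpoly_def inner_Pair_0)
    show "open T" by (rule oT)
    show "(vec 1, 2) \<in> T" by (rule pT)
    show "(0::real^'n, 1::real) \<bullet> (vec 1, 2) = 2" by simp
    show "T \<inter> {x. (0::real^'n, 1::real) \<bullet> x = 2} \<subseteq> Qpoly"
      by (auto simp: T_def Qpoly_def inner_Pair_0 intro: less_imp_le)
  qed
  moreover have "integral_pt ((vec 1::real^'n), (2::real))" by (simp add: integral_pt_def)
  ultimately show ?thesis unfolding seq by blast
qed

theorem mainTheorem6:
  assumes "CARD('n) \<ge> 2"
  shows "(polytope (Qpoly :: ((real^'n) \<times> real) set))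
    \<and> (\<forall>v. v extreme_point_of (Qpoly :: ((real^'n) \<times> real) set) \<longrightarrow> integral_pt v)
    \<and> ({v. v extreme_point_of (Qpoly :: ((real^'n) \<times> real) set) \<and> snd v = 0}
           = {(s *\<^sub>R axis i 1, 0) | s i. s = 1 \<or> s = -1})
    \<and> ({v. v extreme_point_of (Qpoly :: ((real^'n) \<times> real) set) \<and> snd v = 2}
           = {(vec 1 + (s * (real CARD('n) - 1)) *\<^sub>R axis i 1, 2) | s i. s = 1 \<or> s = -1})
    \<and> (\<forall>p \<in> interior (Qpoly :: ((real^'n) \<times> real) set). \<not> integral_pt p)
    \<and> (\<forall>a \<in> (signvecs :: (real^'n) set). \<exists>p \<in> Qpoly. integral_pt p \<and> lhs a p = 1
           \<and> (\<forall>b \<in> signvecs. b \<noteq> a \<longrightarrow> lhs b p < 1) \<and> 0 < snd p \<and> snd p < 2)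
    \<and> (\<exists>p \<in> (Qpoly :: ((real^'n) \<times> real) set). integral_pt p
           \<and> (\<forall>b \<in> signvecs. lhs b p < 1) \<and> snd p = 0)
    \<and> (\<exists>p \<in> (Qpoly :: ((real^'n) \<times> real) set). integral_pt p
           \<and> (\<forall>b \<in> signvecs. lhs b p < 1) \<and> snd p = 2)
    \<and> (\<forall>a \<in> (signvecs :: (real^'n) set).
           {p \<in> Qpoly. lhs a p = 1} facet_of Qpoly
           \<and> (\<exists>p \<in> rel_interior {p \<in> Qpoly. lhs a p = 1}. integral_pt p))
    \<and> ({p \<in> (Qpoly :: ((real^'n) \<times> real) set). snd p = 0} facet_of Qpoly
           \<and> (\<exists>p \<in> rel_interior {p \<in> (Qpoly :: ((real^'n) \<times> real) set). snd p = 0}. integral_pt p))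
    \<and> ({p \<in> (Qpoly :: ((real^'n) \<times> real) set). snd p = 2} facet_of Qpoly
           \<and> (\<exists>p \<in> rel_interior {p \<in> (Qpoly :: ((real^'n) \<times> real) set). snd p = 2}. integral_pt p))"
proof -
  have E: "\<And>v. v extreme_point_of (Qpoly :: ((real^'n) \<times> real) set) \<longleftrightarrow> v \<in> V0 \<union> V2"
    using ext_eq[OF assms] by blast
  have s0: "\<forall>v\<in>(V0 :: ((real^'n) \<times> real) set). snd v = 0" by (auto simp: V0_def)
  have s2: "\<forall>v\<in>(V2 :: ((real^'n) \<times> real) set). snd v = 2" by (auto simp: V2_def)
  have c1: "polytope (Qpoly :: ((real^'n) \<times> real) set)" by (rule Q_polytope)
  have c2: "\<forall>v. v extreme_point_of (Qpoly :: ((real^'n) \<times> real) set) \<longrightarrow> integral_pt v"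
    using E integral_V by blast
  have "{v. v extreme_point_of (Qpoly :: ((real^'n) \<times> real) set) \<and> snd v = 0} = V0"
    unfolding E using s0 s2 by force
  then have c3: "{v. v extreme_point_of (Qpoly :: ((real^'n) \<times> real) set) \<and> snd v = 0}
           = {(s *\<^sub>R axis i 1, 0) | s i. s = 1 \<or> s = -1}"
    by (simp add: V0_def)
  have "{v. v extreme_point_of (Qpoly :: ((real^'n) \<times> real) set) \<and> snd v = 2} = V2"
    unfolding E using s0 s2 by force
  then have c4: "{v. v extreme_point_of (Qpoly :: ((real^'n) \<times> real) set) \<and> snd v = 2}
           = {(vec 1 + (s * (real CARD('n) - 1)) *\<^sub>R axis i 1, 2) | s i. s = 1 \<or> s = -1}"
    by (simp add: V2_def)
  have c5: "\<forall>p \<in> interior (Qpoly :: ((real^'n) \<times> real) set). \<not> integral_pt p"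
    using interior_noint by blast
  have c6: "\<forall>a \<in> (signvecs :: (real^'n) set). \<exists>p \<in> Qpoly. integral_pt p \<and> lhs a p = 1
           \<and> (\<forall>b \<in> signvecs. b \<noteq> a \<longrightarrow> lhs b p < 1) \<and> 0 < snd p \<and> snd p < 2"
  proof
    fix a :: "real^'n" assume a: "a \<in> signvecs"
    have lt: "\<forall>b \<in> signvecs. b \<noteq> a \<longrightarrow> lhs b (pa a) < 1"
    proof (intro ballI impI)
      fix b assume "b \<in> signvecs" "b \<noteq> a"
      then have "lhs b (pa a) \<le> 0" by (rule pa_props(3)[OF a])
      then show "lhs b (pa a) < 1" by linarith
    qed
    have le1: "\<forall>b\<in>signvecs. lhs b (pa a) \<le> 1"
    proof
      fix b :: "real^'n" assume b: "b \<in> signvecs"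
      show "lhs b (pa a) \<le> 1"
      proof (cases "b = a")
        case True then show ?thesis using pa_props(2)[OF a] by simp
      next
        case False then have "lhs b (pa a) < 1" using lt b by blast
        then show ?thesis by linarith
      qed
    qed
    have "pa a \<in> Qpoly"
      unfolding Qpoly_def using le1 pa_props(4)[OF a] by simp
    then show "\<exists>p \<in> Qpoly. integral_pt p \<and> lhs a p = 1
           \<and> (\<forall>b \<in> signvecs. b \<noteq> a \<longrightarrow> lhs b p < 1) \<and> 0 < snd p \<and> snd p < 2"
      using pa_props(1,2,4)[OF a] lt by (intro bexI[of _ "pa a"]) auto
  qed
  have c7: "\<exists>p \<in> (Qpoly :: ((real^'n) \<times> real) set). integral_pt p
           \<and> (\<forall>b \<in> signvecs. lhs b p < 1) \<and> snd p = 0"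
    by (intro bexI[of _ "(0, 0)"]) (auto simp: integral_pt_def lhs_def Qpoly_def)
  have lt2: "\<forall>b \<in> (signvecs :: (real^'n) set). lhs b (vec 1, 2) < 1" using lhs_top[OF _ assms] by blast
  then have "(vec 1 :: real^'n, 2::real) \<in> Qpoly" unfolding Qpoly_def by (simp add: less_imp_le)
  then have c8: "\<exists>p \<in> (Qpoly :: ((real^'n) \<times> real) set). integral_pt p
           \<and> (\<forall>b \<in> signvecs. lhs b p < 1) \<and> snd p = 2"
    using lt2 by (intro bexI[of _ "(vec 1, 2)"]) (auto simp: integral_pt_def)
  have c9: "\<forall>a \<in> (signvecs :: (real^'n) set).
           {p \<in> Qpoly. lhs a p = 1} facet_of Qpoly
           \<and> (\<exists>p \<in> rel_interior {p \<in> Qpoly. lhs a p = 1}. integral_pt p)"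
    using facet_a by blast
  show ?thesis
    by (intro conjI c1 c2 c3 c4 c5 c6 c7 c8 c9 facet_0 facet_2[OF assms])
qed

end
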